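(* For every $M,N\ge 0$, the poset of shuffles $W_{MN}$ is locally rank-symmetric: for every interval $[u,v]$ of $W_{MN}$ and every $r\ge 0$, the number of elements of $[u,v]$ of rank $\rho(u)+r$ equals the number of elements of $[u,v]$ of rank $\rho(v)-r$.
   Context: Let $\mathcal{A}=\{a_1,\dots,a_M\}$ and $\mathcal{X}=\{x_1,\dots,x_N\}$ be disjoint finite sets. A shuffle word is a word (possibly empty) with distinct letters from $\mathcal{A}\cup\mathcal{X}$ in which the letters from $\mathcal{A}$ appear in increasing order of subscripts and the letters from $\mathcal{X}$ appear in increasing order of subscripts. The poset of shuffles $W_{MN}$ is the set of shuffle words ordered by the reflexive-transitive closure of: $w$ is covered by $w'$ iff $w'$ is obtained from $w$ by deleting a letter of $\mathcal{A}$ or inserting a letter of $\mathcal{X}$. It is ranked with rank function $\rho(w)=(M-\#(\{w\}\cap\mathcal{A}))+\#(\{w\}\cap\mathcal{X})$, where $\{w\}$ is the set of letters of $w$. *)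

theory Defs
  imports Main
begin

text \<open>Letters: A i stands for a_i, X j stands for x_j.\<close>
datatype letter = A nat | X nat

fun asubs :: "letter list \<Rightarrow> nat list" where
  "asubs [] = []"
| "asubs (A i # w) = i # asubs w"
| "asubs (X j # w) = asubs w"

fun xsubs :: "letter list \<Rightarrow> nat list" where
  "xsubs [] = []"
| "xsubs (A i # w) = xsubs w"
| "xsubs (X j # w) = j # xsubs w"

definition shuffle_word :: "nat \<Rightarrow> nat \<Rightarrow> letter list \<Rightarrow> bool" where
  "shuffle_word M N w \<longleftrightarrow> distinct w
     \<and> (\<forall>i\<in>set (asubs w). 1 \<le> i \<and> i \<le> M)
     \<and> (\<forall>j\<in>set (xsubs w). 1 \<le> j \<and> j \<le> N)
     \<and> sorted_wrt (<) (asubs w) \<and> sorted_wrt (<) (xsubs w)"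

definition W :: "nat \<Rightarrow> nat \<Rightarrow> letter list set" where
  "W M N = {w. shuffle_word M N w}"

definition covers :: "nat \<Rightarrow> nat \<Rightarrow> letter list \<Rightarrow> letter list \<Rightarrow> bool" where
  "covers M N w w' \<longleftrightarrow> w \<in> W M N \<and> w' \<in> W M N \<and>
     ((\<exists>i xs ys. w = xs @ [A i] @ ys \<and> w' = xs @ ys) \<or>
      (\<exists>j xs ys. w' = xs @ [X j] @ ys \<and> w = xs @ ys))"

definition shuffle_le :: "nat \<Rightarrow> nat \<Rightarrow> letter list \<Rightarrow> letter list \<Rightarrow> bool" where
  "shuffle_le M N = (covers M N)\<^sup>*\<^sup>*"

definition shuffle_rank :: "nat \<Rightarrow> nat \<Rightarrow> letter list \<Rightarrow> nat" where
  "shuffle_rank M N w = (M - length (asubs w)) + length (xsubs w)"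

definition shuffle_interval :: "nat \<Rightarrow> nat \<Rightarrow> letter list \<Rightarrow> letter list \<Rightarrow> letter list set" where
  "shuffle_interval M N u v = {w \<in> W M N. shuffle_le M N u w \<and> shuffle_le M N w v}"

end

theory Submission
  imports Defs "HOL-Computational_Algebra.Polynomial"
begin


lemma asubs_set[simp]: "set (asubs w) = {i. A i \<in> set w}"
  by (induction w rule: asubs.induct) auto
lemma xsubs_set[simp]: "set (xsubs w) = {j. X j \<in> set w}"
  by (induction w rule: xsubs.induct) auto

lemma W_Nil[simp]: "[] \<in> W M N" by (simp add: W_def shuffle_word_def)
lemma W_A_Cons: "A i # w \<in> W M N \<longleftrightarrow> w \<in> W M N \<and> A i \<notin> set w \<and> 1 \<le> i \<and> i \<le> M \<and> (\<forall>k. A k \<in> set w \<longrightarrow> i < k)"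
  by (auto simp: W_def shuffle_word_def)
lemma W_X_Cons: "X j # w \<in> W M N \<longleftrightarrow> w \<in> W M N \<and> X j \<notin> set w \<and> 1 \<le> j \<and> j \<le> N \<and> (\<forall>k. X k \<in> set w \<longrightarrow> j < k)"
  by (auto simp: W_def shuffle_word_def)
lemma W_Cons_tl: "l # w \<in> W M N \<Longrightarrow> w \<in> W M N"
  by (cases l) (auto simp: W_A_Cons W_X_Cons)
lemma W_distinct: "w \<in> W M N \<Longrightarrow> distinct w"
  by (simp add: W_def shuffle_word_def)

lemma W_filter: "w \<in> W M N \<Longrightarrow> filter P w \<in> W M N"
proof (induction w)
  case Nil then show ?case by simp
next
  case (Cons l w)
  then have "w \<in> W M N" using W_Cons_tl by blast
  with Cons show ?case by (cases l) (auto simp: W_A_Cons W_X_Cons)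
qed

lemma filter_cong': "(\<And>x. x \<in> set xs \<Longrightarrow> P x \<longleftrightarrow> Q x) \<Longrightarrow> filter P xs = filter Q xs"
  by (induction xs) auto

definition lec :: "letter list \<Rightarrow> letter list \<Rightarrow> bool" where
  "lec u w \<longleftrightarrow> (\<forall>i. A i \<in> set w \<longrightarrow> A i \<in> set u) \<and> (\<forall>j. X j \<in> set u \<longrightarrow> X j \<in> set w)
     \<and> filter (\<lambda>l. l \<in> set w) u = filter (\<lambda>l. l \<in> set u) w"

lemma lec_refl: "lec u u" by (simp add: lec_def)

lemma lec_step:
  assumes "lec u w" "covers M N w w'"
  shows "lec u w'"
proof -
  have F: "filter (\<lambda>l. l \<in> set w) u = filter (\<lambda>l. l \<in> set u) w" using assms(1) by (simp add: lec_def)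
  from assms(2) have ww: "w \<in> W M N" "w' \<in> W M N" by (auto simp: covers_def)
  from assms(2) consider (del) i xs ys where "w = xs @ [A i] @ ys" "w' = xs @ ys"
    | (ins) j xs ys where "w' = xs @ [X j] @ ys" "w = xs @ ys"
    unfolding covers_def by blast
  then show ?thesis
  proof cases
    case del
    have d: "distinct w" using ww W_distinct by blast
    with del have n: "A i \<notin> set xs" "A i \<notin> set ys" by auto
    have "filter (\<lambda>l. l \<in> set w') u = filter (\<lambda>l. l \<in> set w') (filter (\<lambda>l. l \<in> set w) u)"
      using del by (auto simp: filter_filter intro: filter_cong)
    also have "\<dots> = filter (\<lambda>l. l \<in> set w') (filter (\<lambda>l. l \<in> set u) w)" using F by simp
    also have "\<dots> = filter (\<lambda>l. l \<in> set u) w'"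
    proof -
      have "filter (\<lambda>l. l \<in> set w') (filter (\<lambda>l. l \<in> set u) xs) = filter (\<lambda>l. l \<in> set u) xs"
        using del by (auto simp: filter_filter intro!: filter_cong')
      moreover have "filter (\<lambda>l. l \<in> set w') (filter (\<lambda>l. l \<in> set u) ys) = filter (\<lambda>l. l \<in> set u) ys"
        using del by (auto simp: filter_filter intro!: filter_cong')
      ultimately show ?thesis using del n by simp
    qed
    finally show ?thesis using assms(1) del unfolding lec_def by auto
  next
    case ins
    have d: "distinct w'" using ww W_distinct by blast
    with ins have n: "X j \<notin> set xs" "X j \<notin> set ys" by auto
    have nu: "X j \<notin> set u" using assms(1) ins n unfolding lec_def by auto
    have "filter (\<lambda>l. l \<in> set w') u = filter (\<lambda>l. l \<in> set w) u"
      using ins nu by (auto intro: filter_cong)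
    also have "\<dots> = filter (\<lambda>l. l \<in> set u) w" using F by simp
    also have "\<dots> = filter (\<lambda>l. l \<in> set u) w'" using ins nu by simp
    finally show ?thesis using assms(1) ins unfolding lec_def by auto
  qed
qed

lemma le_lec: "shuffle_le M N u w \<Longrightarrow> lec u w"
  unfolding shuffle_le_def
  by (induction rule: rtranclp_induct) (auto intro: lec_refl lec_step)

lemma del_chain:
  "u \<in> W M N \<Longrightarrow> (\<forall>l\<in>set u. \<not> P l \<longrightarrow> (\<exists>i. l = A i)) \<Longrightarrow> shuffle_le M N u (filter P u)"
proof (induction "length (filter (\<lambda>l. \<not> P l) u)" arbitrary: P rule: less_induct)
  case less
  show ?case
  proof (cases "\<exists>l\<in>set u. \<not> P l")
    case False
    then have "filter P u = u" by (simp add: filter_id_conv)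
    then show ?thesis by (simp add: shuffle_le_def)
  next
    case True
    then obtain l where l: "l \<in> set u" "\<not> P l" by blast
    with less.prems obtain i where li: "l = A i" by blast
    define P' where "P' = (\<lambda>y. P y \<or> y = l)"
    have "length (filter (\<lambda>y. \<not> P' y) u) = length (filter (\<lambda>y. y \<noteq> l) (filter (\<lambda>y. \<not> P y) u))"
      by (simp add: P'_def filter_filter conj_commute)
    also have "\<dots> < length (filter (\<lambda>y. \<not> P y) u)"
      using l by (intro length_filter_less) auto
    finally have IH: "shuffle_le M N u (filter P' u)"
      using less.hyps less.prems by (auto simp: P'_def)
    have d: "distinct u" using less.prems W_distinct by blast
    obtain xs ys where u: "u = xs @ l # ys" using split_list[OF l(1)] by blast
    with d have n: "l \<notin> set xs" "l \<notin> set ys" by auto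
    have e1: "filter P' u = filter P xs @ [A i] @ filter P ys"
    proof -
      have "filter P' xs = filter P xs" using n by (auto simp: P'_def intro!: filter_cong')
      moreover have "filter P' ys = filter P ys" using n by (auto simp: P'_def intro!: filter_cong')
      ultimately show ?thesis using u li by (simp add: P'_def)
    qed
    have e2: "filter P u = filter P xs @ filter P ys" using u l by simp
    have "covers M N (filter P' u) (filter P u)"
      unfolding covers_def using e1 e2 W_filter less.prems by blast
    with IH show ?thesis unfolding shuffle_le_def by (rule rtranclp.rtrancl_into_rtrancl)
  qed
qed

lemma ins_chain:
  "w \<in> W M N \<Longrightarrow> (\<forall>l\<in>set w. \<not> P l \<longrightarrow> (\<exists>j. l = X j)) \<Longrightarrow> shuffle_le M N (filter P w) w"
proof (induction "length (filter (\<lambda>l. \<not> P l) w)" arbitrary: P rule: less_induct)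
  case less
  show ?case
  proof (cases "\<exists>l\<in>set w. \<not> P l")
    case False
    then have "filter P w = w" by (simp add: filter_id_conv)
    then show ?thesis by (simp add: shuffle_le_def)
  next
    case True
    then obtain l where l: "l \<in> set w" "\<not> P l" by blast
    with less.prems obtain j where lj: "l = X j" by blast
    define P' where "P' = (\<lambda>y. P y \<or> y = l)"
    have "length (filter (\<lambda>y. \<not> P' y) w) = length (filter (\<lambda>y. y \<noteq> l) (filter (\<lambda>y. \<not> P y) w))"
      by (simp add: P'_def filter_filter conj_commute)
    also have "\<dots> < length (filter (\<lambda>y. \<not> P y) w)"
      using l by (intro length_filter_less) auto
    finally have IH: "shuffle_le M N (filter P' w) w"
      using less.hyps less.prems by (auto simp: P'_def)
    have d: "distinct w" using less.prems W_distinct by blast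
    obtain xs ys where u: "w = xs @ l # ys" using split_list[OF l(1)] by blast
    with d have n: "l \<notin> set xs" "l \<notin> set ys" by auto
    have e1: "filter P' w = filter P xs @ [X j] @ filter P ys"
    proof -
      have "filter P' xs = filter P xs" using n by (auto simp: P'_def intro!: filter_cong')
      moreover have "filter P' ys = filter P ys" using n by (auto simp: P'_def intro!: filter_cong')
      ultimately show ?thesis using u lj by (simp add: P'_def)
    qed
    have e2: "filter P w = filter P xs @ filter P ys" using u l by simp
    have "covers M N (filter P w) (filter P' w)"
      unfolding covers_def using e1 e2 W_filter less.prems by blast
    then show ?thesis using IH unfolding shuffle_le_def by (rule converse_rtranclp_into_rtranclp)
  qed
qed

lemma lec_le:
  assumes "u \<in> W M N" "w \<in> W M N" "lec u w"
  shows "shuffle_le M N u w"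
proof -
  have F: "filter (\<lambda>l. l \<in> set w) u = filter (\<lambda>l. l \<in> set u) w" using assms(3) by (simp add: lec_def)
  have 1: "shuffle_le M N u (filter (\<lambda>l. l \<in> set w) u)"
  proof (rule del_chain[OF assms(1)], intro ballI impI)
    fix l assume "l \<in> set u" "l \<notin> set w"
    moreover have "\<forall>j. X j \<in> set u \<longrightarrow> X j \<in> set w" using assms(3) by (simp add: lec_def)
    ultimately show "\<exists>i. l = A i" by (metis letter.exhaust)
  qed
  have 2: "shuffle_le M N (filter (\<lambda>l. l \<in> set u) w) w"
  proof (rule ins_chain[OF assms(2)], intro ballI impI)
    fix l assume "l \<in> set w" "l \<notin> set u"
    moreover have "\<forall>i. A i \<in> set w \<longrightarrow> A i \<in> set u" using assms(3) by (simp add: lec_def)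
    ultimately show "\<exists>j. l = X j" by (metis letter.exhaust)
  qed
  from 1 2 F show ?thesis unfolding shuffle_le_def by auto
qed

lemma le_iff_lec: "u \<in> W M N \<Longrightarrow> w \<in> W M N \<Longrightarrow> shuffle_le M N u w \<longleftrightarrow> lec u w"
  using le_lec lec_le by blast



lemma filter_insert_notin: "l \<notin> set u \<Longrightarrow> filter (\<lambda>y. y = l \<or> P y) u = filter P u"
  by (induction u) auto

lemma lec_dropA: "A i \<notin> set w \<Longrightarrow> lec (A i # u) w \<longleftrightarrow> lec u w"
  unfolding lec_def by (auto simp: filter_insert_notin)

lemma lec_dropX: "X j \<notin> set w \<Longrightarrow> lec w (X j # v) \<longleftrightarrow> lec w v"
  unfolding lec_def by (auto simp: filter_insert_notin)

lemma lec_consA: "A i \<notin> set v \<Longrightarrow> lec (A i # w) v \<longleftrightarrow> lec w v"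
  unfolding lec_def by (auto simp: filter_insert_notin)

lemma lec_consX: "X j \<notin> set u \<Longrightarrow> lec u (X j # w) \<longleftrightarrow> lec u w"
  unfolding lec_def by (auto simp: filter_insert_notin)

lemma lec_both: "l \<notin> set u \<Longrightarrow> l \<notin> set w \<Longrightarrow> lec (l # u) (l # w) \<longleftrightarrow> lec u w"
  unfolding lec_def by (auto simp: filter_insert_notin)

lemma lec_first: "lec (p # as) (q # bs) \<Longrightarrow> q \<in> set (p # as) \<Longrightarrow> p \<in> set (q # bs) \<Longrightarrow> p = q"
  unfolding lec_def by auto

lemma lec_A: "lec u w \<Longrightarrow> A i \<in> set w \<Longrightarrow> A i \<in> set u"
  unfolding lec_def by auto
lemma lec_X: "lec u w \<Longrightarrow> X j \<in> set u \<Longrightarrow> X j \<in> set w"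
  unfolding lec_def by auto

lemma distinct_asubs: "distinct w \<Longrightarrow> distinct (asubs w)"
  by (induction w rule: asubs.induct) auto
lemma distinct_xsubs: "distinct w \<Longrightarrow> distinct (xsubs w)"
  by (induction w rule: xsubs.induct) auto

definition rk :: "nat \<Rightarrow> letter list \<Rightarrow> int" where
  "rk M w = int M - int (length (asubs w)) + int (length (xsubs w))"

lemma rk_A[simp]: "rk M (A i # w) = rk M w - 1" by (simp add: rk_def)
lemma rk_X[simp]: "rk M (X j # w) = rk M w + 1" by (simp add: rk_def)

lemma len_asubs: "distinct w \<Longrightarrow> length (asubs w) = card {i. A i \<in> set w}"
  using distinct_card[OF distinct_asubs] by (metis asubs_set)
lemma len_xsubs: "distinct w \<Longrightarrow> length (xsubs w) = card {j. X j \<in> set w}"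
  using distinct_card[OF distinct_xsubs] by (metis xsubs_set)

lemma rk_mono:
  assumes "u \<in> W M N" "w \<in> W M N" "lec u w"
  shows "rk M u \<le> rk M w"
proof -
  have du: "distinct u" and dw: "distinct w" using assms W_distinct by auto
  have "card {i. A i \<in> set w} \<le> card {i. A i \<in> set u}"
  proof (rule card_mono)
    show "finite {i. A i \<in> set u}" using finite_set[of "asubs u"] by simp
    show "{i. A i \<in> set w} \<subseteq> {i. A i \<in> set u}" using assms(3) lec_A by blast
  qed
  moreover have "card {j. X j \<in> set u} \<le> card {j. X j \<in> set w}"
  proof (rule card_mono)
    show "finite {j. X j \<in> set w}" using finite_set[of "xsubs w"] by simp
    show "{j. X j \<in> set u} \<subseteq> {j. X j \<in> set w}" using assms(3) lec_X by blast
  qed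
  ultimately show ?thesis using du dw by (simp add: rk_def len_asubs len_xsubs)
qed

lemma rank_rk:
  assumes "w \<in> W M N"
  shows "int (shuffle_rank M N w) = rk M w"
proof -
  have d: "distinct w" using assms W_distinct by auto
  have "{i. A i \<in> set w} \<subseteq> {1..M}" using assms by (auto simp: W_def shuffle_word_def)
  then have "card {i. A i \<in> set w} \<le> M" using card_mono[of "{1..M}"] by fastforce
  then show ?thesis using d by (simp add: rk_def shuffle_rank_def len_asubs)
qed

lemma finite_W: "finite (W M N)"
proof -
  define S where "S = A ` {1..M} \<union> X ` {1..N}"
  have "W M N \<subseteq> {xs. set xs \<subseteq> S \<and> length xs \<le> card S}"
  proof
    fix w assume w: "w \<in> W M N"
    have "set w \<subseteq> S"
    proof
      fix l assume "l \<in> set w"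
      with w show "l \<in> S" by (cases l) (auto simp: S_def W_def shuffle_word_def)
    qed
    moreover have "length w \<le> card S"
      using distinct_card[OF W_distinct[OF w]] card_mono[OF _ \<open>set w \<subseteq> S\<close>] by (simp add: S_def)
    ultimately show "w \<in> {xs. set xs \<subseteq> S \<and> length xs \<le> card S}" by simp
  qed
  moreover have "finite {xs. set xs \<subseteq> S \<and> length xs \<le> card S}"
    by (rule finite_lists_length_le) (simp add: S_def)
  ultimately show ?thesis by (rule finite_subset)
qed

definition Iv :: "nat \<Rightarrow> nat \<Rightarrow> letter list \<Rightarrow> letter list \<Rightarrow> letter list set" where
  "Iv M N u v = {w \<in> W M N. lec u w \<and> lec w v}"

lemma finite_Iv: "finite (Iv M N u v)"
  using finite_W by (rule rev_finite_subset) (auto simp: Iv_def)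

lemma Iv_notA: "w \<in> Iv M N u v \<Longrightarrow> A i \<notin> set u \<Longrightarrow> A i \<notin> set w"
  unfolding Iv_def using lec_A by blast
lemma Iv_notX: "w \<in> Iv M N u v \<Longrightarrow> X j \<notin> set v \<Longrightarrow> X j \<notin> set w"
  unfolding Iv_def using lec_X by blast
lemma Iv_common: "w \<in> Iv M N u v \<Longrightarrow> l \<in> set u \<Longrightarrow> l \<in> set v \<Longrightarrow> l \<in> set w"
  unfolding Iv_def using lec_A lec_X by (cases l) blast+
lemma Iv_cover: "w \<in> Iv M N u v \<Longrightarrow> l \<in> set w \<Longrightarrow> l \<in> set u \<or> l \<in> set v"
  unfolding Iv_def using lec_A lec_X by (cases l) blast+

context
  fixes M N i u' v
  assumes u: "A i # u' \<in> W M N" and av: "A i \<notin> set v"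
begin

lemma G1: "w \<in> Iv M N u' v \<Longrightarrow> w \<in> Iv M N (A i # u') v"
proof -
  assume w: "w \<in> Iv M N u' v"
  have "A i \<notin> set u'" using u by (simp add: W_A_Cons)
  then have "A i \<notin> set w" using w Iv_notA by blast
  then show ?thesis using w lec_dropA by (simp add: Iv_def)
qed

lemma G2: "w \<in> Iv M N (A i # u') v \<Longrightarrow> A i \<notin> set w \<Longrightarrow> w \<in> Iv M N u' v"
  using lec_dropA by (simp add: Iv_def)

lemma G3: "w \<in> Iv M N u' v \<Longrightarrow> A i # w \<in> Iv M N (A i # u') v"
proof -
  assume w: "w \<in> Iv M N u' v"
  have nu: "A i \<notin> set u'" using u by (simp add: W_A_Cons)
  then have nw: "A i \<notin> set w" using w Iv_notA by blast
  have "A i # w \<in> W M N" using u w nw lec_A unfolding W_A_Cons Iv_def by blast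
  then show ?thesis using w nu nw lec_both lec_consA av by (simp add: Iv_def)
qed

lemma G4: "A i # w \<in> Iv M N (A i # u') v \<Longrightarrow> w \<in> Iv M N u' v"
proof -
  assume w: "A i # w \<in> Iv M N (A i # u') v"
  have nu: "A i \<notin> set u'" using u by (simp add: W_A_Cons)
  have nw: "A i \<notin> set w" "w \<in> W M N" using w by (auto simp: Iv_def W_A_Cons)
  then show ?thesis using w nu nw lec_both lec_consA av by (simp add: Iv_def)
qed

end

context
  fixes M N j u v'
  assumes v: "X j # v' \<in> W M N" and xu: "X j \<notin> set u"
begin

lemma H1: "w \<in> Iv M N u v' \<Longrightarrow> w \<in> Iv M N u (X j # v')"
proof -
  assume w: "w \<in> Iv M N u v'"
  have "X j \<notin> set v'" using v by (simp add: W_X_Cons)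
  then have "X j \<notin> set w" using w Iv_notX by blast
  then show ?thesis using w lec_dropX by (simp add: Iv_def)
qed

lemma H2: "w \<in> Iv M N u (X j # v') \<Longrightarrow> X j \<notin> set w \<Longrightarrow> w \<in> Iv M N u v'"
  using lec_dropX by (simp add: Iv_def)

lemma H3: "w \<in> Iv M N u v' \<Longrightarrow> X j # w \<in> Iv M N u (X j # v')"
proof -
  assume w: "w \<in> Iv M N u v'"
  have nv: "X j \<notin> set v'" using v by (simp add: W_X_Cons)
  then have nw: "X j \<notin> set w" using w Iv_notX by blast
  have "X j # w \<in> W M N" using v w nw lec_X unfolding W_X_Cons Iv_def by blast
  then show ?thesis using w nv nw lec_both lec_consX xu by (simp add: Iv_def)
qed

lemma H4: "X j # w \<in> Iv M N u (X j # v') \<Longrightarrow> w \<in> Iv M N u v'"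
proof -
  assume w: "X j # w \<in> Iv M N u (X j # v')"
  have nv: "X j \<notin> set v'" using v by (simp add: W_X_Cons)
  have nw: "X j \<notin> set w" "w \<in> W M N" using w by (auto simp: Iv_def W_X_Cons)
  then show ?thesis using w nv nw lec_both lec_consX xu by (simp add: Iv_def)
qed

end

context
  fixes M N c u' v'
  assumes u: "c # u' \<in> W M N" and v: "c # v' \<in> W M N"
begin

lemma C3: "w \<in> Iv M N u' v' \<Longrightarrow> c # w \<in> Iv M N (c # u') (c # v')"
proof -
  assume w: "w \<in> Iv M N u' v'"
  have nu: "c \<notin> set u'" "c \<notin> set v'" using u v W_distinct by fastforce+
  have cw: "c # w \<in> W M N"
  proof (cases c)
    case (A i)
    then have "A i \<notin> set w" using w nu Iv_notA by blast
    then show ?thesis using u w lec_A unfolding A W_A_Cons Iv_def by blast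
  next
    case (X j)
    then have "X j \<notin> set w" using w nu Iv_notX by blast
    then show ?thesis using v w lec_X unfolding X W_X_Cons Iv_def by blast
  qed
  then have "c \<notin> set w" using W_distinct by fastforce
  then show ?thesis using w nu cw lec_both by (simp add: Iv_def)
qed

lemma C4: "c # w \<in> Iv M N (c # u') (c # v') \<Longrightarrow> w \<in> Iv M N u' v'"
proof -
  assume w: "c # w \<in> Iv M N (c # u') (c # v')"
  have nu: "c \<notin> set u'" "c \<notin> set v'" using u v W_distinct by fastforce+
  have "c \<notin> set w" "w \<in> W M N" using w W_distinct W_Cons_tl by (fastforce simp: Iv_def)+
  then show ?thesis using w nu lec_both by (simp add: Iv_def)
qed

end



definition pal :: "nat \<Rightarrow> int poly \<Rightarrow> bool" where
  "pal n p \<longleftrightarrow> (\<forall>k. coeff p k = (if k \<le> n then coeff p (n - k) else 0))"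

lemma palD: "pal n p \<Longrightarrow> k \<le> n \<Longrightarrow> coeff p k = coeff p (n - k)"
  unfolding pal_def by (drule spec[of _ k]) simp
lemma palZ: "pal n p \<Longrightarrow> n < k \<Longrightarrow> coeff p k = 0"
  unfolding pal_def by (drule spec[of _ k]) simp
lemma palI: "(\<And>k. k \<le> n \<Longrightarrow> coeff p k = coeff p (n - k)) \<Longrightarrow> (\<And>k. n < k \<Longrightarrow> coeff p k = 0) \<Longrightarrow> pal n p"
  unfolding pal_def by (metis not_le)

lemma pal_add: assumes "pal n p" "pal n q" shows "pal n (p + q)"
proof (rule palI)
  fix k assume k: "k \<le> n"
  show "coeff (p + q) k = coeff (p + q) (n - k)" using palD[OF assms(1) k] palD[OF assms(2) k] by simp
next
  fix k assume k: "n < k"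
  show "coeff (p + q) k = 0" using palZ[OF assms(1) k] palZ[OF assms(2) k] by simp
qed
lemma pal_diff: assumes "pal n p" "pal n q" shows "pal n (p - q)"
proof (rule palI)
  fix k assume k: "k \<le> n"
  show "coeff (p - q) k = coeff (p - q) (n - k)" using palD[OF assms(1) k] palD[OF assms(2) k] by simp
next
  fix k assume k: "n < k"
  show "coeff (p - q) k = 0" using palZ[OF assms(1) k] palZ[OF assms(2) k] by simp
qed
lemma pal_one: "pal 0 1"
  by (rule palI) (auto simp: coeff_1)

lemma pal_sh2: assumes "pal n p" shows "pal (n + 2) (pCons 0 p)"
proof (rule palI)
  fix k assume k: "k \<le> n + 2"
  show "coeff (pCons 0 p) k = coeff (pCons 0 p) (n + 2 - k)"
  proof (cases k)
    case 0 then show ?thesis using palZ[OF assms, of "Suc n"] by simp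
  next
    case (Suc j)
    show ?thesis
    proof (cases "j \<le> n")
      case True
      then have "n + 2 - k = Suc (n - j)" using Suc by simp
      then show ?thesis using True Suc palD[OF assms True] by simp
    next
      case False
      then have "j = Suc n" using k Suc by simp
      then show ?thesis using Suc palZ[OF assms, of j] by simp
    qed
  qed
next
  fix k assume "n + 2 < k"
  then obtain j where "k = Suc j" "n < j" by (cases k) auto
  then show "coeff (pCons 0 p) k = 0" using palZ[OF assms] by simp
qed

lemma pal_1t: assumes "pal n p" shows "pal (n + 1) (p + pCons 0 p)"
proof (rule palI)
  fix k assume k: "k \<le> n + 1"
  define f where "f k = coeff p k + (if k = 0 then 0 else coeff p (k - 1))" for k
  have c: "coeff (p + pCons 0 p) k = f k" for k by (simp add: f_def coeff_pCons')
  have "f k = f (n + 1 - k)"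
  proof (cases k)
    case 0
    then show ?thesis using palD[OF assms, of 0] palZ[OF assms, of "Suc n"] by (simp add: f_def)
  next
    case (Suc j)
    show ?thesis
    proof (cases "j < n")
      case True
      have e: "n + 1 - k = Suc (n - Suc j)" using Suc True by simp
      have 1: "coeff p (Suc j) = coeff p (n - Suc j)" using palD[OF assms, of "Suc j"] True by simp
      have 2: "coeff p j = coeff p (n - j)" using palD[OF assms, of j] True by simp
      have 3: "n - j = Suc (n - Suc j)" using True by simp
      show ?thesis unfolding f_def using Suc e 1 2 3 by simp
    next
      case False
      then have "j = n" using k Suc by simp
      then show ?thesis using Suc palZ[OF assms, of "Suc n"] palD[OF assms, of 0] by (simp add: f_def)
    qed
  qed
  then show "coeff (p + pCons 0 p) k = coeff (p + pCons 0 p) (n + 1 - k)" using c by simp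
next
  fix k assume "n + 1 < k"
  then show "coeff (p + pCons 0 p) k = 0" using palZ[OF assms, of k] palZ[OF assms, of "k - 1"]
    by (simp add: coeff_pCons')
qed

lemma pal_1t2: assumes "pal n p" shows "pal (n + 2) (p + pCons 0 (pCons 0 p))"
proof (rule palI)
  fix k assume k: "k \<le> n + 2"
  define f where "f k = coeff p k + (if 2 \<le> k then coeff p (k - 2) else 0)" for k
  have c: "coeff (p + pCons 0 (pCons 0 p)) k = f k" for k
    by (cases k; cases "k - 1") (auto simp: f_def coeff_pCons')
  have z: "coeff p m = 0" if "n < m" for m using palZ[OF assms that] .
  have d: "coeff p m = coeff p (n - m)" if "m \<le> n" for m using palD[OF assms that] .
  have E1: "(if 2 \<le> n + 2 - k then coeff p (n + 2 - k - 2) else 0) = coeff p k"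
  proof (cases "k \<le> n")
    case True then show ?thesis using d[OF True] by simp
  next
    case False then show ?thesis using z[of k] by simp
  qed
  have E2: "(if 2 \<le> k then coeff p (k - 2) else 0) = coeff p (n + 2 - k)"
  proof (cases "2 \<le> k")
    case True
    then have "k - 2 \<le> n" "n - (k - 2) = n + 2 - k" using k by auto
    then show ?thesis using d[of "k - 2"] True by simp
  next
    case False then show ?thesis using z[of "n + 2 - k"] by simp
  qed
  have "f k = f (n + 2 - k)" unfolding f_def using E1 E2 by simp
  then show "coeff (p + pCons 0 (pCons 0 p)) k = coeff (p + pCons 0 (pCons 0 p)) (n + 2 - k)" using c by simp
next
  fix k assume "n + 2 < k"
  then show "coeff (p + pCons 0 (pCons 0 p)) k = 0" using palZ[OF assms, of k] palZ[OF assms, of "k - 2"]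
    by (cases k; cases "k - 1") (auto simp: coeff_pCons')
qed



definition F :: "nat \<Rightarrow> int \<Rightarrow> letter list set \<Rightarrow> int poly" where
  "F M b S = (\<Sum>w\<in>S. monom 1 (nat (rk M w - b)))"

lemma sum_pCons0: "(\<Sum>x\<in>S. pCons 0 (f x)) = pCons (0::int) (\<Sum>x\<in>S. f x)"
  by (induction S rule: infinite_finite_induct) (simp_all add: add_pCons[symmetric])

lemma F_shift: "(\<And>w. w \<in> S \<Longrightarrow> b \<le> rk M w) \<Longrightarrow> F M (b - 1) S = pCons 0 (F M b S)"
proof -
  assume h: "\<And>w. w \<in> S \<Longrightarrow> b \<le> rk M w"
  have "F M (b - 1) S = (\<Sum>w\<in>S. pCons 0 (monom 1 (nat (rk M w - b))))"
    unfolding F_def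
  proof (rule sum.cong)
    fix w assume "w \<in> S"
    then have "b \<le> rk M w" using h by blast
    then have "nat (rk M w - (b - 1)) = Suc (nat (rk M w - b))" by simp
    then show "monom 1 (nat (rk M w - (b - 1))) = pCons 0 (monom 1 (nat (rk M w - b)))"
      by (simp add: monom_Suc)
  qed simp
  then show ?thesis by (simp add: sum_pCons0 F_def)
qed

lemma F_consA: "F M b (Cons (A i) ` S) = F M (b + 1) S"
  unfolding F_def by (subst sum.reindex) (auto simp: inj_on_def intro!: sum.cong arg_cong[where f="\<lambda>n. monom 1 (nat n)"])

lemma F_consX: "F M b (Cons (X j) ` S) = F M (b - 1) S"
  unfolding F_def by (subst sum.reindex) (auto simp: inj_on_def intro!: sum.cong arg_cong[where f="\<lambda>n. monom 1 (nat n)"])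

lemma F_cons: "(\<And>w. rk M (c # w) - rk M (c # u) = rk M w - rk M u) \<Longrightarrow> F M (rk M (c # u)) (Cons c ` S) = F M (rk M u) S"
  unfolding F_def by (subst sum.reindex) (auto simp: inj_on_def intro!: sum.cong)

lemma F_diff: "T \<subseteq> S \<Longrightarrow> finite S \<Longrightarrow> F M b (S - T) = F M b S - F M b T"
  unfolding F_def by (rule sum_diff) (auto intro: finite_subset)

lemma F_un: "finite S \<Longrightarrow> finite T \<Longrightarrow> S \<inter> T = {} \<Longrightarrow> F M b (S \<union> T) = F M b S + F M b T"
  unfolding F_def by (rule sum.union_disjoint)

definition Q :: "nat \<Rightarrow> nat \<Rightarrow> letter list \<Rightarrow> letter list \<Rightarrow> int poly" where
  "Q M N u v = F M (rk M u) (Iv M N u v)"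

lemma Iv_rk: "w \<in> Iv M N u v \<Longrightarrow> u \<in> W M N \<Longrightarrow> v \<in> W M N \<Longrightarrow> rk M u \<le> rk M w \<and> rk M w \<le> rk M v"
  unfolding Iv_def using rk_mono by blast



lemma pc_add: "pCons (0::int) (p + q) = pCons 0 p + pCons 0 q" by simp
lemma pc_diff: "pCons (0::int) (p - q) = pCons 0 p - pCons 0 q" by simp

lemma main:
  assumes "u \<in> W M N" "v \<in> W M N" "lec u v"
  shows "pal (nat (rk M v - rk M u)) (Q M N u v)"
  using assms
proof (induction "length u + length v" arbitrary: u v rule: less_induct)
  case less
  note uW = less.prems(1) and vW = less.prems(2) and uv = less.prems(3)
  have hu: "\<exists>i. l = A i" if "u = l # u'" "l \<notin> set v" for l u'
  proof (cases l)
    case (X j)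
    then have "X j \<in> set u" using that by simp
    then have "X j \<in> set v" using lec_X[OF uv] by blast
    then show ?thesis using that X by simp
  qed simp
  have hv: "\<exists>j. l = X j" if "v = l # v'" "l \<notin> set u" for l v'
  proof (cases l)
    case (A i)
    then have "A i \<in> set v" using that by simp
    then have "A i \<in> set u" using lec_A[OF uv] by blast
    then show ?thesis using that A by simp
  qed simp
  consider (BC) i u' j v' where "u = A i # u'" "A i \<notin> set v" "v = X j # v'" "X j \<notin> set u"
   | (B) i u' where "u = A i # u'" "A i \<notin> set v" "\<not>(\<exists>l v'. v = l # v' \<and> l \<notin> set u)"
   | (C) j v' where "v = X j # v'" "X j \<notin> set u" "\<not>(\<exists>l u'. u = l # u' \<and> l \<notin> set v)"
   | (AA) c u' v' where "u = c # u'" "v = c # v'"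
   | (E) "u = []" "v = []"
  proof -
    show ?thesis
    proof (cases "\<exists>l u'. u = l # u' \<and> l \<notin> set v")
      case True
      then obtain i u' where u: "u = A i # u'" "A i \<notin> set v" using hu by blast
      show ?thesis
      proof (cases "\<exists>l v'. v = l # v' \<and> l \<notin> set u")
        case True then obtain j v' where "v = X j # v'" "X j \<notin> set u" using hv by blast
        then show ?thesis using u that(1) by blast
      next
        case False then show ?thesis using u that(2) by blast
      qed
    next
      case False
      show ?thesis
      proof (cases "\<exists>l v'. v = l # v' \<and> l \<notin> set u")
        case True then obtain j v' where "v = X j # v'" "X j \<notin> set u" using hv by blast
        then show ?thesis using False that(3) by blast
      next
        case False2: False
        show ?thesis
        proof (cases u)
          case Nil
          then have "v = []" using False2 by (cases v) auto
          then show ?thesis using Nil that(5) by blast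
        next
          case (Cons c u')
          then have cv: "c \<in> set v" using False by blast
          then obtain d v' where v: "v = d # v'" by (cases v) auto
          then have "d \<in> set u" using False2 by blast
          then have "c = d" using lec_first[of c u' d v'] uv Cons v cv by simp
          then show ?thesis using Cons v that(4) by blast
        qed
      qed
    qed
  qed
  then show ?case
  proof cases
    case E
    have I: "Iv M N u v = {[]}"
    proof
      show "Iv M N u v \<subseteq> {[]}"
      proof
        fix w assume w: "w \<in> Iv M N u v"
        have "w = []" using Iv_cover[OF w] E by (cases w) auto
        then show "w \<in> {[]}" by simp
      qed
      show "{[]} \<subseteq> Iv M N u v" using E by (simp add: Iv_def lec_refl)
    qed
    show ?thesis unfolding Q_def F_def I using E pal_one by (simp add: one_pCons)
  next
    case AA
    have u'W: "u' \<in> W M N" and v'W: "v' \<in> W M N" using uW vW AA W_Cons_tl by blast+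
    have nc: "c \<notin> set u'" "c \<notin> set v'" using uW vW AA W_distinct by fastforce+
    have u'v': "lec u' v'" using uv AA lec_both[OF nc] by simp
    have IH: "pal (nat (rk M v' - rk M u')) (Q M N u' v')"
      using less.hyps[OF _ u'W v'W u'v'] AA by simp
    have I: "Iv M N u v = Cons c ` Iv M N u' v'"
    proof
      show "Iv M N u v \<subseteq> Cons c ` Iv M N u' v'"
      proof
        fix w assume w: "w \<in> Iv M N u v"
        have cw: "c \<in> set w" using Iv_common[OF w] AA by simp
        then obtain y w' where wy: "w = y # w'" by (cases w) auto
        have l1: "lec (c # u') (y # w')" and l2: "lec (y # w') (c # v')"
          using w wy AA by (auto simp: Iv_def)
        have "y \<in> set u \<or> y \<in> set v" using Iv_cover[OF w] wy by simp
        then have "y = c"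
        proof
          assume "y \<in> set u"
          then show "y = c" using lec_first[OF l1] cw wy AA by simp
        next
          assume "y \<in> set v"
          then show "y = c" using lec_first[OF l2] cw wy AA by simp
        qed
        then show "w \<in> Cons c ` Iv M N u' v'"
          using C4[of c u' M N v'] uW vW w wy AA by auto
      qed
      show "Cons c ` Iv M N u' v' \<subseteq> Iv M N u v"
        using C3[of c u' M N v'] uW vW AA by auto
    qed
    have rkc: "\<And>w. rk M (c # w) - rk M (c # u') = rk M w - rk M u'" by (cases c) auto
    have "Q M N u v = F M (rk M (c # u')) (Cons c ` Iv M N u' v')" unfolding Q_def I using AA by simp
    then have "Q M N u v = Q M N u' v'" unfolding Q_def using F_cons[OF rkc] by simp
    moreover have "rk M v - rk M u = rk M v' - rk M u'" using AA by (cases c) auto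
    ultimately show ?thesis using IH by simp
  next
    case B
    have u'W: "u' \<in> W M N" using uW B W_Cons_tl by blast
    have nu: "A i \<notin> set u'" using uW B by (simp add: W_A_Cons)
    have u'v: "lec u' v" using uv B lec_dropA by simp
    have IH: "pal (nat (rk M v - rk M u')) (Q M N u' v)"
      using less.hyps[OF _ u'W vW u'v] B by simp
    have uW': "A i # u' \<in> W M N" using uW B by simp
    have I: "Iv M N u v = Iv M N u' v \<union> Cons (A i) ` Iv M N u' v"
    proof
      show "Iv M N u v \<subseteq> Iv M N u' v \<union> Cons (A i) ` Iv M N u' v"
      proof
        fix w assume w: "w \<in> Iv M N u v"
        show "w \<in> Iv M N u' v \<union> Cons (A i) ` Iv M N u' v"
        proof (cases "A i \<in> set w")
          case False
          then show ?thesis using G2[OF uW' B(2)] w B by auto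
        next
          case True
          then obtain y w' where wy: "w = y # w'" by (cases w) auto
          have l1: "lec (A i # u') (y # w')" and l2: "lec (y # w') v"
            using w wy B by (auto simp: Iv_def)
          have "y \<in> set u \<or> y \<in> set v" using Iv_cover[OF w] wy by simp
          then have "y = A i"
          proof
            assume "y \<in> set u"
            then show "y = A i" using lec_first[OF l1] True wy B by simp
          next
            assume yv: "y \<in> set v"
            then obtain d v' where v: "v = d # v'" by (cases v) auto
            then have du: "d \<in> set u" using B by blast
            then have "d \<in> set w" using Iv_common[OF w] v by simp
            then have "y = d" using lec_first[of y w' d v'] l2 v wy yv by simp
            then show "y = A i" using lec_first[OF l1] True wy B du by simp
          qed
          then show ?thesis using G4[OF uW' B(2)] w wy B by auto
        qed
      qed
      show "Iv M N u' v \<union> Cons (A i) ` Iv M N u' v \<subseteq> Iv M N u v"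
        using G1[OF uW' B(2)] G3[OF uW' B(2)] B by auto
    qed
    have disj: "Iv M N u' v \<inter> Cons (A i) ` Iv M N u' v = {}"
      by (auto dest: Iv_notA[OF _ nu])
    have rks: "\<And>w. w \<in> Iv M N u' v \<Longrightarrow> rk M u' \<le> rk M w" using Iv_rk u'W vW by blast
    have "Q M N u v = F M (rk M u' - 1) (Iv M N u' v) + F M (rk M u' - 1) (Cons (A i) ` Iv M N u' v)"
      unfolding Q_def I using B by (simp add: F_un finite_Iv disj)
    also have "\<dots> = Q M N u' v + pCons 0 (Q M N u' v)"
      unfolding Q_def F_consA using F_shift[OF rks] by simp
    finally have Qe: "Q M N u v = Q M N u' v + pCons 0 (Q M N u' v)" .
    have "rk M u' \<le> rk M v" using rk_mono[OF u'W vW u'v] .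
    then have "nat (rk M v - rk M u) = nat (rk M v - rk M u') + 1" using B by simp
    then show ?thesis using Qe pal_1t[OF IH] by simp
  next
    case C
    have v'W: "v' \<in> W M N" using vW C W_Cons_tl by blast
    have nv: "X j \<notin> set v'" using vW C by (simp add: W_X_Cons)
    have uv': "lec u v'" using uv C lec_dropX by simp
    have IH: "pal (nat (rk M v' - rk M u)) (Q M N u v')"
      using less.hyps[OF _ uW v'W uv'] C by simp
    have vW': "X j # v' \<in> W M N" using vW C by simp
    have I: "Iv M N u v = Iv M N u v' \<union> Cons (X j) ` Iv M N u v'"
    proof
      show "Iv M N u v \<subseteq> Iv M N u v' \<union> Cons (X j) ` Iv M N u v'"
      proof
        fix w assume w: "w \<in> Iv M N u v"
        show "w \<in> Iv M N u v' \<union> Cons (X j) ` Iv M N u v'"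
        proof (cases "X j \<in> set w")
          case False
          then show ?thesis using H2[OF vW' C(2)] w C by auto
        next
          case True
          then obtain y w' where wy: "w = y # w'" by (cases w) auto
          have l1: "lec u (y # w')" and l2: "lec (y # w') (X j # v')"
            using w wy C by (auto simp: Iv_def)
          have "y \<in> set u \<or> y \<in> set v" using Iv_cover[OF w] wy by simp
          then have "y = X j"
          proof
            assume "y \<in> set v"
            then show "y = X j" using lec_first[OF l2] True wy C by simp
          next
            assume yu: "y \<in> set u"
            then obtain d u' where u: "u = d # u'" by (cases u) auto
            then have dv: "d \<in> set v" using C by blast
            then have "d \<in> set w" using Iv_common[OF w] u by simp
            then have "d = y" using lec_first[of d u' y w'] l1 u wy yu by simp
            then show "y = X j" using lec_first[OF l2] True wy C dv by simp
          qed
          then show ?thesis using H4[OF vW' C(2)] w wy C by auto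
        qed
      qed
      show "Iv M N u v' \<union> Cons (X j) ` Iv M N u v' \<subseteq> Iv M N u v"
        using H1[OF vW' C(2)] H3[OF vW' C(2)] C by auto
    qed
    have disj: "Iv M N u v' \<inter> Cons (X j) ` Iv M N u v' = {}"
      by (auto dest: Iv_notX[OF _ nv])
    have rks: "\<And>w. w \<in> Iv M N u v' \<Longrightarrow> rk M u \<le> rk M w" using Iv_rk uW v'W by blast
    have "Q M N u v = F M (rk M u) (Iv M N u v') + F M (rk M u) (Cons (X j) ` Iv M N u v')"
      unfolding Q_def I by (simp add: F_un finite_Iv disj)
    also have "\<dots> = Q M N u v' + pCons 0 (Q M N u v')"
      unfolding Q_def F_consX using F_shift[OF rks] by simp
    finally have Qe: "Q M N u v = Q M N u v' + pCons 0 (Q M N u v')" .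
    have "rk M u \<le> rk M v'" using rk_mono[OF uW v'W uv'] .
    then have "nat (rk M v - rk M u) = nat (rk M v' - rk M u) + 1" using C by simp
    then show ?thesis using Qe pal_1t[OF IH] by simp
  next
    case BC
    have u'W: "u' \<in> W M N" using uW BC W_Cons_tl by blast
    have v'W: "v' \<in> W M N" using vW BC W_Cons_tl by blast
    have nu: "A i \<notin> set u'" using uW BC by (simp add: W_A_Cons)
    have nv: "X j \<notin> set v'" using vW BC by (simp add: W_X_Cons)
    have uW': "A i # u' \<in> W M N" using uW BC by simp
    have vW': "X j # v' \<in> W M N" using vW BC by simp
    have av: "A i \<notin> set v" and av': "A i \<notin> set v'" using BC by auto
    have xu: "X j \<notin> set u" and xu': "X j \<notin> set u'" using BC by auto
    have u'v: "lec u' v" using uv BC lec_dropA by simp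
    have uv': "lec u v'" using uv BC lec_dropX by simp
    have u'v': "lec u' v'" using u'v BC lec_dropX[OF xu'] by simp
    have IH1: "pal (nat (rk M v - rk M u')) (Q M N u' v)"
      using less.hyps[OF _ u'W vW u'v] BC by simp
    have IH2: "pal (nat (rk M v' - rk M u)) (Q M N u v')"
      using less.hyps[OF _ uW v'W uv'] BC by simp
    have IH3: "pal (nat (rk M v' - rk M u')) (Q M N u' v')"
      using less.hyps[OF _ u'W v'W u'v'] BC by simp
    define I1 where "I1 = Iv M N u' v"
    define I2 where "I2 = Iv M N u v'"
    define I3 where "I3 = Iv M N u' v'"
    have s31: "I3 \<subseteq> I1" unfolding I1_def I3_def using H1[OF vW' xu'] BC by auto
    have s32: "I3 \<subseteq> I2" unfolding I2_def I3_def using G1[OF uW' av'] BC by auto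
    have notI3a: "w \<notin> I3" if "A i \<in> set w" for w using Iv_notA[OF _ nu] that unfolding I3_def by blast
    have notI3x: "w \<notin> I3" if "X j \<in> set w" for w using Iv_notX[OF _ nv] that unfolding I3_def by blast
    have I1a: "A i \<notin> set w" if "w \<in> I1" for w using Iv_notA[OF _ nu] that unfolding I1_def by blast
    have I2x: "X j \<notin> set w" if "w \<in> I2" for w using Iv_notX[OF _ nv] that unfolding I2_def by blast
    have I2a: "A i \<in> set w" if "w \<in> I2 - I3" for w
      using G2[OF uW' av'] that BC unfolding I2_def I3_def by blast
    have I1x: "X j \<in> set w" if "w \<in> I1 - I3" for w
      using H2[OF vW' xu'] that BC unfolding I1_def I3_def by blast
    have I: "Iv M N u v = (I1 \<union> (I2 - I3)) \<union> (Cons (A i) ` (I1 - I3) \<union> Cons (X j) ` (I2 - I3))"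
    proof
      show "Iv M N u v \<subseteq> (I1 \<union> (I2 - I3)) \<union> (Cons (A i) ` (I1 - I3) \<union> Cons (X j) ` (I2 - I3))"
      proof
        fix w assume w: "w \<in> Iv M N u v"
        show "w \<in> (I1 \<union> (I2 - I3)) \<union> (Cons (A i) ` (I1 - I3) \<union> Cons (X j) ` (I2 - I3))"
        proof (cases "A i \<in> set w")
          case False
          then have "w \<in> I1" using G2[OF uW' av] w BC unfolding I1_def by auto
          then show ?thesis by blast
        next
          case Ta: True
          show ?thesis
          proof (cases "X j \<in> set w")
            case False
            then have "w \<in> I2" using H2[OF vW' xu] w BC unfolding I2_def by auto
            then show ?thesis using notI3a[OF Ta] by blast
          next
            case Tx: True
            then obtain y w' where wy: "w = y # w'" by (cases w) auto
            have l1: "lec (A i # u') (y # w')" and l2: "lec (y # w') (X j # v')"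
              using w wy BC by (auto simp: Iv_def)
            have "y \<in> set u \<or> y \<in> set v" using Iv_cover[OF w] wy by simp
            then show ?thesis
            proof
              assume "y \<in> set u"
              then have y: "y = A i" using lec_first[OF l1] Ta wy BC by simp
              then have "w' \<in> I1" using G4[OF uW' av] w wy BC unfolding I1_def by auto
              moreover have "X j \<in> set w'" using Tx wy y by auto
              ultimately show ?thesis using notI3x wy y by blast
            next
              assume "y \<in> set v"
              then have y: "y = X j" using lec_first[OF l2] Tx wy BC by simp
              then have "w' \<in> I2" using H4[OF vW' xu] w wy BC unfolding I2_def by auto
              moreover have "A i \<in> set w'" using Ta wy y by auto
              ultimately show ?thesis using notI3a wy y by blast
            qed
          qed
        qed
      qed
      show "(I1 \<union> (I2 - I3)) \<union> (Cons (A i) ` (I1 - I3) \<union> Cons (X j) ` (I2 - I3)) \<subseteq> Iv M N u v"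
        using G1[OF uW' av] G3[OF uW' av] H1[OF vW' xu] H3[OF vW' xu] BC
        unfolding I1_def I2_def by auto
    qed
    have fin: "finite I1" "finite I2" "finite I3" unfolding I1_def I2_def I3_def by (simp_all add: finite_Iv)
    have D1: "I1 \<inter> (I2 - I3) = {}" using I1a I2a by blast
    have D2: "(I1 \<union> (I2 - I3)) \<inter> (Cons (A i) ` (I1 - I3) \<union> Cons (X j) ` (I2 - I3)) = {}"
    proof -
      have "Cons (A i) w \<notin> I1 \<union> (I2 - I3)" if "w \<in> I1 - I3" for w
        using I1a[of "A i # w"] I2x[of "A i # w"] I1x[OF that] by auto
      moreover have "Cons (X j) w \<notin> I1 \<union> (I2 - I3)" if "w \<in> I2 - I3" for w
        using I1a[of "X j # w"] I2x[of "X j # w"] I2a[OF that] by auto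
      ultimately show ?thesis by blast
    qed
    have D3: "Cons (A i) ` (I1 - I3) \<inter> Cons (X j) ` (I2 - I3) = {}" by auto
    define b where "b = rk M u"
    have bu': "rk M u' = b + 1" using BC by (simp add: b_def)
    have rk1: "\<And>w. w \<in> I1 \<Longrightarrow> b + 1 \<le> rk M w" using Iv_rk u'W vW bu' unfolding I1_def by fastforce
    have rk2: "\<And>w. w \<in> I2 - I3 \<Longrightarrow> b \<le> rk M w" using Iv_rk uW v'W unfolding I2_def b_def by fastforce
    have rk3: "\<And>w. w \<in> I3 \<Longrightarrow> b + 1 \<le> rk M w" using Iv_rk u'W v'W bu' unfolding I3_def by fastforce
    have Q1: "Q M N u' v = F M (b + 1) I1" unfolding Q_def I1_def bu' ..
    have Q2: "Q M N u v' = F M b I2" unfolding Q_def I2_def b_def ..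
    have Q3: "Q M N u' v' = F M (b + 1) I3" unfolding Q_def I3_def bu' ..
    have e1: "F M b I1 = pCons 0 (F M (b + 1) I1)" using F_shift[of I1 "b + 1" M, OF rk1] by simp
    have e3: "F M b I3 = pCons 0 (F M (b + 1) I3)" using F_shift[of I3 "b + 1" M, OF rk3] by simp
    have e2: "F M b (I2 - I3) = F M b I2 - pCons 0 (F M (b + 1) I3)"
      using F_diff[OF s32 fin(2)] e3 by simp
    have e4: "F M b (Cons (A i) ` (I1 - I3)) = F M (b + 1) I1 - F M (b + 1) I3"
      using F_consA F_diff[OF s31 fin(1)] by simp
    have e5: "F M b (Cons (X j) ` (I2 - I3)) = pCons 0 (F M b I2 - pCons 0 (F M (b + 1) I3))"
      using F_consX F_shift[of "I2 - I3" b M, OF rk2] e2 by simp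
    have "Q M N u v = F M b (I1 \<union> (I2 - I3)) + F M b (Cons (A i) ` (I1 - I3) \<union> Cons (X j) ` (I2 - I3))"
      unfolding Q_def b_def[symmetric] I using D2 fin by (intro F_un) auto
    also have "\<dots> = F M b I1 + F M b (I2 - I3) + (F M b (Cons (A i) ` (I1 - I3)) + F M b (Cons (X j) ` (I2 - I3)))"
      using D1 D3 fin by (simp add: F_un)
    finally have "Q M N u v = pCons 0 (Q M N u' v) + (Q M N u v' - pCons 0 (Q M N u' v'))
       + ((Q M N u' v - Q M N u' v') + pCons 0 (Q M N u v' - pCons 0 (Q M N u' v')))"
      using e1 e2 e4 e5 Q1 Q2 Q3 by simp
    then have Qe: "Q M N u v = ((Q M N u' v + pCons 0 (Q M N u' v)) + (Q M N u v' + pCons 0 (Q M N u v')))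
       - ((Q M N u' v' + pCons 0 (pCons 0 (Q M N u' v'))) + pCons 0 (Q M N u' v'))"
      by (simp only: pc_add pc_diff)
    have "rk M u' \<le> rk M v'" using rk_mono[OF u'W v'W u'v'] .
    then have n1: "nat (rk M v - rk M u) = nat (rk M v - rk M u') + 1"
      and n2: "nat (rk M v - rk M u) = nat (rk M v' - rk M u) + 1"
      and n3: "nat (rk M v - rk M u) = nat (rk M v' - rk M u') + 2" using BC by auto
    have p1: "pal (nat (rk M v - rk M u)) (Q M N u' v + pCons 0 (Q M N u' v))"
      unfolding n1 by (rule pal_1t[OF IH1])
    have p2: "pal (nat (rk M v - rk M u)) (Q M N u v' + pCons 0 (Q M N u v'))"
      unfolding n2 by (rule pal_1t[OF IH2])
    have p3: "pal (nat (rk M v - rk M u)) (Q M N u' v' + pCons 0 (pCons 0 (Q M N u' v')))"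
      unfolding n3 by (rule pal_1t2[OF IH3])
    have p4: "pal (nat (rk M v - rk M u)) (pCons 0 (Q M N u' v'))"
      unfolding n3 by (rule pal_sh2[OF IH3])
    show ?thesis unfolding Qe by (rule pal_diff[OF pal_add[OF p1 p2] pal_add[OF p3 p4]])
  qed
qed



lemma coeff_Q: "coeff (Q M N u v) k = int (card {w \<in> Iv M N u v. nat (rk M w - rk M u) = k})"
proof -
  have "coeff (Q M N u v) k = (\<Sum>w\<in>Iv M N u v. if nat (rk M w - rk M u) = k then 1 else 0)"
    unfolding Q_def F_def by (simp add: coeff_sum)
  also have "\<dots> = int (card {w \<in> Iv M N u v. nat (rk M w - rk M u) = k})"
    by (subst sum.inter_filter[symmetric]) (simp_all add: finite_Iv)
  finally show ?thesis .
qed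

theorem proposition2p4:
  fixes M N r :: nat and u v :: "letter list"
  assumes "u \<in> W M N" and "v \<in> W M N" and "shuffle_le M N u v"
  shows "card {w \<in> shuffle_interval M N u v. shuffle_rank M N w = shuffle_rank M N u + r}
       = card {w \<in> shuffle_interval M N u v. shuffle_rank M N w + r = shuffle_rank M N v}"
proof -
  have uv: "lec u v" using le_lec[OF assms(3)] .
  have SI: "shuffle_interval M N u v = Iv M N u v"
    unfolding shuffle_interval_def Iv_def using le_iff_lec assms(1,2) by blast
  have rw: "int (shuffle_rank M N w) = rk M w" if "w \<in> Iv M N u v" for w
    using rank_rk that by (auto simp: Iv_def)
  have ru: "int (shuffle_rank M N u) = rk M u" and rv: "int (shuffle_rank M N v) = rk M v"
    using rank_rk assms by auto
  have bnd: "rk M u \<le> rk M w \<and> rk M w \<le> rk M v" if "w \<in> Iv M N u v" for w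
    using Iv_rk that assms by blast
  define n where "n = nat (rk M v - rk M u)"
  have P: "pal n (Q M N u v)" unfolding n_def using main[OF assms(1,2) uv] .
  have L: "{w \<in> Iv M N u v. shuffle_rank M N w = shuffle_rank M N u + r} = {w \<in> Iv M N u v. nat (rk M w - rk M u) = r}"
  proof -
    have "shuffle_rank M N w = shuffle_rank M N u + r \<longleftrightarrow> nat (rk M w - rk M u) = r" if "w \<in> Iv M N u v" for w
      using rw[OF that] ru bnd[OF that] by linarith
    then show ?thesis by blast
  qed
  show ?thesis
  proof (cases "r \<le> n")
    case True
    have R: "{w \<in> Iv M N u v. shuffle_rank M N w + r = shuffle_rank M N v} = {w \<in> Iv M N u v. nat (rk M w - rk M u) = n - r}"
    proof -
      have "shuffle_rank M N w + r = shuffle_rank M N v \<longleftrightarrow> nat (rk M w - rk M u) = n - r" if "w \<in> Iv M N u v" for w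
        using rw[OF that] rv bnd[OF that] True unfolding n_def by linarith
      then show ?thesis by blast
    qed
    have "int (card {w \<in> Iv M N u v. nat (rk M w - rk M u) = r}) = int (card {w \<in> Iv M N u v. nat (rk M w - rk M u) = n - r})"
      using palD[OF P True] by (simp add: coeff_Q)
    then show ?thesis unfolding SI L R by simp
  next
    case False
    have E1: "{w \<in> Iv M N u v. shuffle_rank M N w = shuffle_rank M N u + r} = {}"
    proof -
      have "shuffle_rank M N w \<noteq> shuffle_rank M N u + r" if "w \<in> Iv M N u v" for w
        using rw[OF that] ru bnd[OF that] False unfolding n_def by linarith
      then show ?thesis by blast
    qed
    have E2: "{w \<in> Iv M N u v. shuffle_rank M N w + r = shuffle_rank M N v} = {}"
    proof -
      have "shuffle_rank M N w + r \<noteq> shuffle_rank M N v" if "w \<in> Iv M N u v" for w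
        using rw[OF that] rv bnd[OF that] False unfolding n_def by linarith
      then show ?thesis by blast
    qed
    show ?thesis unfolding SI E1 E2 by simp
  qed
qed

end
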